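(* For every conjunctive query $q$: (a) if $q_1,\dots,q_c$ are the connected components of $q$, then $\chi(q)=\sum_{i=1}^c\chi(q_i)$; (b) for any $M\subseteq\mathrm{atoms}(q)$, $\chi(q/M)=\chi(q)-\chi(M)$; (c) $\chi(q)\le 0$; (d) for any $M\subseteq\mathrm{atoms}(q)$, $\chi(q)\le\chi(q/M)$.
   Context: A conjunctive query $q=S_1(\bar x_1),\dots,S_\ell(\bar x_\ell)$ consists of atoms over distinct relation symbols, $S_j$ having arity $a_j$ (number of argument positions; variables may repeat within an atom). Its hypergraph has the variables as vertices and a hyperedge $\mathrm{vars}(S_j)$ per atom; connected components are the maximal connected subqueries. The characteristic is $\chi(q)=k+\ell-\sum_j a_j-c$, where $k$ is the number of distinct variables, $\ell$ the number of atoms and $c$ the number of connected components. For a set $M$ of atoms, $\chi(M)$ is the characteristic of the query consisting of the atoms in $M$. The contraction $q/M$ is obtained by, for each connected component of (the hypergraph of) $M$, identifying all its variables into a single variable, and deleting the atoms of $M$; the remaining atoms keep their arities. E.g. for $L_5=S_1(x_0,x_1),\dots,S_5(x_4,x_5)$, $L_5/\{S_2,S_4\}=S_1(x_0,x_1),S_3(x_1,x_3),S_5(x_3,x_5)$. *)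

theory Defs
  imports Main
begin

text \<open>A conjunctive query is given by a finite set A of (distinct) relation symbols,
  the atoms, together with the argument list args r of each atom r (its arity is
  length (args r); variables may repeat).  Arguments of symbols outside A are ignored.\<close>

definition qvars :: "'r set \<Rightarrow> ('r \<Rightarrow> 'v list) \<Rightarrow> 'v set" where
  "qvars A args = (\<Union>r\<in>A. set (args r))"

definition adj_rel :: "'r set \<Rightarrow> ('r \<Rightarrow> 'v list) \<Rightarrow> ('r \<times> 'r) set" where
  "adj_rel A args = {(r, s). r \<in> A \<and> s \<in> A \<and> set (args r) \<inter> set (args s) \<noteq> {}}"

definition conn_rel :: "'r set \<Rightarrow> ('r \<Rightarrow> 'v list) \<Rightarrow> ('r \<times> 'r) set" where
  "conn_rel A args = (Id_on A \<union> adj_rel A args)\<^sup>+"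

definition components :: "'r set \<Rightarrow> ('r \<Rightarrow> 'v list) \<Rightarrow> 'r set set" where
  "components A args = A // conn_rel A args"

definition chi :: "'r set \<Rightarrow> ('r \<Rightarrow> 'v list) \<Rightarrow> int" where
  "chi A args = int (card (qvars A args)) + int (card A)
     - (\<Sum>r\<in>A. int (length (args r))) - int (card (components A args))"

text \<open>Contraction q/M: each variable x is mapped to the set of variables of the
  connected component of M containing it (if any), otherwise to {x}.  Thus all variables
  of one component of M are identified into a single new variable.\<close>
definition contr_var :: "'r set \<Rightarrow> ('r \<Rightarrow> 'v list) \<Rightarrow> 'v \<Rightarrow> 'v set" where
  "contr_var M args x =
     (if \<exists>C\<in>components M args. x \<in> qvars C args
      then qvars (THE C. C \<in> components M args \<and> x \<in> qvars C args) args
      else {x})"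

definition contr_atoms :: "'r set \<Rightarrow> 'r set \<Rightarrow> 'r set" where
  "contr_atoms A M = A - M"

definition contr_args :: "'r set \<Rightarrow> ('r \<Rightarrow> 'v list) \<Rightarrow> 'r \<Rightarrow> 'v set list" where
  "contr_args M args = (\<lambda>r. map (contr_var M args) (args r))"

end

theory Submission
  imports Defs
begin


lemma conn_sub: "conn_rel B args \<subseteq> B \<times> B"
proof -
  have "Id_on B \<union> adj_rel B args \<subseteq> B \<times> B" unfolding adj_rel_def by auto
  then show ?thesis unfolding conn_rel_def by (metis trancl_subset_Sigma)
qed

lemma conn_equiv: "equiv B (conn_rel B args)"
proof (rule equivI)
  show "conn_rel B args \<subseteq> B \<times> B" by (rule conn_sub)
  show "refl_on B (conn_rel B args)"
  proof (rule refl_onI)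
    fix x assume "x \<in> B"
    then have "(x, x) \<in> Id_on B" by (rule Id_onI)
    then show "(x, x) \<in> conn_rel B args" unfolding conn_rel_def by (rule r_into_trancl[OF UnI1])
  qed
  have "sym (Id_on B \<union> adj_rel B args)" unfolding sym_def adj_rel_def by auto
  then show "sym (conn_rel B args)" unfolding conn_rel_def by (rule sym_trancl)
  show "trans (conn_rel B args)" unfolding conn_rel_def by (rule trans_trancl)
qed

lemma conn_mono: assumes "B \<subseteq> A" shows "conn_rel B args \<subseteq> conn_rel A args"
proof
  fix p assume p: "p \<in> conn_rel B args"
  have "Id_on B \<union> adj_rel B args \<subseteq> Id_on A \<union> adj_rel A args" using assms unfolding adj_rel_def by auto
  then show "p \<in> conn_rel A args" using p unfolding conn_rel_def by (rule trancl_mono[rotated])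
qed

lemma conn_adj: "r \<in> B \<Longrightarrow> s \<in> B \<Longrightarrow> set (args r) \<inter> set (args s) \<noteq> {} \<Longrightarrow> (r, s) \<in> conn_rel B args"
  unfolding conn_rel_def adj_rel_def by (rule r_into_trancl) auto

lemma conn_refl: "r \<in> B \<Longrightarrow> (r, r) \<in> conn_rel B args"
  unfolding conn_rel_def by (rule r_into_trancl) auto

lemma conn_trans: "(r, s) \<in> conn_rel B args \<Longrightarrow> (s, t) \<in> conn_rel B args \<Longrightarrow> (r, t) \<in> conn_rel B args"
  unfolding conn_rel_def by (rule trancl_trans)

lemma conn_closed:
  assumes "B \<subseteq> A" and cl: "\<And>u v. u \<in> B \<Longrightarrow> v \<in> A \<Longrightarrow> set (args u) \<inter> set (args v) \<noteq> {} \<Longrightarrow> v \<in> B"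
    and "(u, v) \<in> conn_rel A args" and "u \<in> B"
  shows "v \<in> B \<and> (u, v) \<in> conn_rel B args"
  using assms(3) unfolding conn_rel_def
proof (induction rule: trancl_induct)
  case (base y)
  then show ?case using \<open>u \<in> B\<close> cl unfolding adj_rel_def by (auto intro: r_into_trancl)
next
  case (step y z)
  then have "z \<in> B \<and> (y, z) \<in> (Id_on B \<union> adj_rel B args)"
    using cl unfolding adj_rel_def by auto
  with step show ?case by (metis trancl.trancl_into_trancl)
qed

lemma closed_class:
  assumes "B \<subseteq> A" and cl: "\<And>u v. u \<in> B \<Longrightarrow> v \<in> A \<Longrightarrow> set (args u) \<inter> set (args v) \<noteq> {} \<Longrightarrow> v \<in> B"
    and "u \<in> B"
  shows "conn_rel A args `` {u} = conn_rel B args `` {u}"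
proof
  show "conn_rel A args `` {u} \<subseteq> conn_rel B args `` {u}"
  proof
    fix v assume "v \<in> conn_rel A args `` {u}"
    then have uv: "(u, v) \<in> conn_rel A args" by simp
    have uB: "u \<in> B" by fact
    have "v \<in> B \<and> (u, v) \<in> conn_rel B args"
      apply (rule conn_closed[of B A args u v])
         apply (rule assms(1))
        apply (rule cl, assumption+)
       apply (rule uv)
      apply (rule uB)
      done
    then have "(u, v) \<in> conn_rel B args" by blast
    then show "v \<in> conn_rel B args `` {u}" by simp
  qed
  show "conn_rel B args `` {u} \<subseteq> conn_rel A args `` {u}" by (rule Image_mono[OF conn_mono[OF assms(1)] subset_refl])
qed

lemma comp_closed_rel:
  assumes "D \<in> components A args" "u \<in> D" "(u, v) \<in> conn_rel A args"
  shows "v \<in> D"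
  using in_quotient_imp_closed[OF conn_equiv assms(1)[unfolded components_def] assms(2,3)] .

lemma comp_sub: "D \<in> components A args \<Longrightarrow> D \<subseteq> A"
  unfolding components_def by (rule in_quotient_imp_subset[OF conn_equiv])

lemma comp_closed:
  assumes "D \<in> components A args" "u \<in> D" "v \<in> A" "set (args u) \<inter> set (args v) \<noteq> {}"
  shows "v \<in> D"
proof -
  have "u \<in> A" using comp_sub[OF assms(1)] assms(2) by blast
  then have "(u, v) \<in> conn_rel A args" by (rule conn_adj[OF _ assms(3,4)])
  then show ?thesis by (rule comp_closed_rel[OF assms(1,2)])
qed

lemma comp_class:
  assumes "D \<in> components A args" "u \<in> D"
  shows "D = conn_rel A args `` {u}"
proof -
  from assms(1) obtain x where x: "x \<in> A" "D = conn_rel A args `` {x}"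
    unfolding components_def by (auto elim: quotientE)
  then have "(x, u) \<in> conn_rel A args" using assms(2) by simp
  then show ?thesis using equiv_class_eq[OF conn_equiv \<open>(x, u) \<in> conn_rel A args\<close>] x(2) by simp
qed

lemma comp_ne: "D \<in> components A args \<Longrightarrow> D \<noteq> {}"
  unfolding components_def by (rule in_quotient_imp_non_empty[OF conn_equiv])

lemma comp_disj: "C \<in> components A args \<Longrightarrow> D \<in> components A args \<Longrightarrow> C \<noteq> D \<Longrightarrow> C \<inter> D = {}"
  unfolding components_def using quotient_disj[OF conn_equiv, of C A args D] by blast

lemma comp_union: "\<Union>(components A args) = A"
  unfolding components_def by (rule Union_quotient[OF conn_equiv])

lemma comp_in: "u \<in> A \<Longrightarrow> conn_rel A args `` {u} \<in> components A args"
  unfolding components_def by (rule quotientI)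

lemma comp_self: "u \<in> A \<Longrightarrow> u \<in> conn_rel A args `` {u}"
  by (simp add: conn_refl)

lemma comp_finite: "finite A \<Longrightarrow> finite (components A args)"
  unfolding components_def by (rule finite_quotient[OF _ conn_sub])

lemma qvars_finite: "finite A \<Longrightarrow> finite (qvars A args)"
  unfolding qvars_def by auto

lemma qvars_mono: "B \<subseteq> A \<Longrightarrow> qvars B args \<subseteq> qvars A args"
  unfolding qvars_def by auto

lemma comp_vars_disj:
  assumes "C \<in> components A args" "D \<in> components A args" "C \<noteq> D"
  shows "qvars C args \<inter> qvars D args = {}"
proof (rule ccontr)
  assume "qvars C args \<inter> qvars D args \<noteq> {}"
  then obtain x u v where uv: "u \<in> C" "v \<in> D" "x \<in> set (args u)" "x \<in> set (args v)"
    unfolding qvars_def by blast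
  have vA: "v \<in> A" using comp_sub[OF assms(2)] uv(2) by blast
  have "set (args u) \<inter> set (args v) \<noteq> {}" using uv by blast
  then have "v \<in> C" by (rule comp_closed[OF assms(1) uv(1) vA])
  then show False using comp_disj[OF assms] uv(2) by blast
qed

lemma comp_var_atom:
  assumes "C \<in> components A args" "x \<in> qvars C args" "r \<in> A" "x \<in> set (args r)"
  shows "r \<in> C"
proof -
  obtain u where u: "u \<in> C" "x \<in> set (args u)" using assms(2) unfolding qvars_def by blast
  have "set (args u) \<inter> set (args r) \<noteq> {}" using u assms(4) by blast
  then show ?thesis by (rule comp_closed[OF assms(1) u(1) assms(3)])
qed

lemma qvars_comp: "qvars A args = (\<Union>C\<in>components A args. qvars C args)"
proof -
  have "(\<Union>r\<in>\<Union>(components A args). set (args r)) = (\<Union>C\<in>components A args. \<Union>r\<in>C. set (args r))"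
    by blast
  then show ?thesis unfolding qvars_def comp_union .
qed

lemma comp_of_comp:
  assumes "D \<in> components A args"
  shows "components D args = {D}"
proof -
  have DA: "D \<subseteq> A" by (rule comp_sub[OF assms])
  have eq: "conn_rel D args `` {u} = D" if "u \<in> D" for u
  proof -
    have "conn_rel A args `` {u} = conn_rel D args `` {u}"
      by (rule closed_class[OF DA _ that]) (rule comp_closed[OF assms])
    then show ?thesis using comp_class[OF assms that] by simp
  qed
  obtain u where "u \<in> D" using comp_ne[OF assms] by blast
  have "D // conn_rel D args = (\<Union>x\<in>D. {conn_rel D args `` {x}})" unfolding quotient_def ..
  also have "\<dots> = {D}" by (rule UN_constant_eq[OF \<open>u \<in> D\<close>]) (simp add: eq)
  finally show ?thesis unfolding components_def .
qed



lemma qvars_Un: "qvars (X \<union> Y) args = qvars X args \<union> qvars Y args"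
  unfolding qvars_def by blast

lemma cv_comp:
  assumes C: "C \<in> components M args" and x: "x \<in> qvars C args"
  shows "contr_var M args x = qvars C args"
proof -
  have uniq: "C' = C" if h: "C' \<in> components M args \<and> x \<in> qvars C' args" for C'
  proof (rule ccontr)
    assume ne: "C' \<noteq> C"
    have "qvars C' args \<inter> qvars C args = {}" by (rule comp_vars_disj[OF conjunct1[OF h] C ne])
    moreover have "x \<in> qvars C' args" by (rule conjunct2[OF h])
    ultimately show False using x by blast
  qed
  have th: "(THE C'. C' \<in> components M args \<and> x \<in> qvars C' args) = C"
  proof (rule the_equality)
    show "C \<in> components M args \<and> x \<in> qvars C args" using C x by (rule conjI)
  next
    fix C' assume "C' \<in> components M args \<and> x \<in> qvars C' args"
    then show "C' = C" by (rule uniq)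
  qed
  have ex: "\<exists>C'\<in>components M args. x \<in> qvars C' args" using C x by (rule bexI[rotated])
  show ?thesis unfolding contr_var_def by (simp only: if_P[OF ex] th)
qed

lemma cv_out:
  assumes "x \<notin> qvars M args"
  shows "contr_var M args x = {x}"
proof -
  have "\<not> (\<exists>C\<in>components M args. x \<in> qvars C args)"
  proof
    assume "\<exists>C\<in>components M args. x \<in> qvars C args"
    then obtain C where "C \<in> components M args" "x \<in> qvars C args" by (rule bexE)
    then have "x \<in> (\<Union>C\<in>components M args. qvars C args)" by (rule UN_I)
    then show False using assms qvars_comp[of M args] by simp
  qed
  then show ?thesis unfolding contr_var_def by (rule if_not_P)
qed

lemma cv_cases:
  obtains (comp) C where "C \<in> components M args" "x \<in> qvars C args" "contr_var M args x = qvars C args"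
  | (out) "x \<notin> qvars M args" "contr_var M args x = {x}"
proof (cases "x \<in> qvars M args")
  case True
  then have "x \<in> (\<Union>C\<in>components M args. qvars C args)" using qvars_comp[of M args] by simp
  then obtain C where C: "C \<in> components M args" "x \<in> qvars C args" by (rule UN_E)
  show ?thesis by (rule comp[OF C cv_comp[OF C]])
next
  case False
  show ?thesis by (rule out[OF False cv_out[OF False]])
qed

lemma cv_self: "x \<in> contr_var M args x"
proof (rule cv_cases[where M=M and args=args and x=x])
  fix C assume "C \<in> components M args" "x \<in> qvars C args" "contr_var M args x = qvars C args"
  then show ?thesis by simp
next
  assume "x \<notin> qvars M args" "contr_var M args x = {x}"
  then show ?thesis by simp
qed

lemma cv_eq:
  assumes z: "z \<in> contr_var M args x"
  shows "contr_var M args z = contr_var M args x"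
proof (rule cv_cases[where M=M and args=args and x=x])
  fix C assume C: "C \<in> components M args" "x \<in> qvars C args" and e: "contr_var M args x = qvars C args"
  have "z \<in> qvars C args" using z e by simp
  then have "contr_var M args z = qvars C args" by (rule cv_comp[OF C(1)])
  then show ?thesis using e by simp
next
  assume "x \<notin> qvars M args" "contr_var M args x = {x}"
  then show ?thesis using z by simp
qed

lemma rename_chi:
  assumes inj: "inj_on f (qvars A args)"
  shows "chi A (\<lambda>r. map f (args r)) = chi A args"
proof -
  let ?args = "\<lambda>r. map f (args r)"
  have qv: "qvars A ?args = f ` qvars A args" unfolding qvars_def by auto
  have "adj_rel A ?args = adj_rel A args"
  proof -
    have "(f ` set (args r) \<inter> f ` set (args s) \<noteq> {}) = (set (args r) \<inter> set (args s) \<noteq> {})"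
      if "r \<in> A" "s \<in> A" for r s
    proof -
      have "f ` (set (args r) \<inter> set (args s)) = f ` set (args r) \<inter> f ` set (args s)"
        by (rule inj_on_image_Int[OF inj]) (use that in \<open>auto simp: qvars_def\<close>)
      then show ?thesis by (metis image_is_empty)
    qed
    then show ?thesis unfolding adj_rel_def by auto
  qed
  then have "components A ?args = components A args"
    unfolding components_def conn_rel_def by simp
  moreover have "card (qvars A ?args) = card (qvars A args)"
    unfolding qv by (rule card_image[OF inj])
  ultimately show ?thesis unfolding chi_def by simp
qed


lemma key_fwd:
  assumes MA: "M \<subseteq> A" and p: "(r, s) \<in> conn_rel (A - M) (contr_args M args)"
  shows "(r, s) \<in> conn_rel A args"
proof -
  let ?cv = "contr_var M args"
  have stp: "(u, v) \<in> conn_rel A args"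
    if uv: "(u, v) \<in> Id_on (A - M) \<union> adj_rel (A - M) (contr_args M args)" for u v
  proof (cases "(u, v) \<in> Id_on (A - M)")
    case True
    then have "u = v" "u \<in> A" by auto
    then show ?thesis using conn_refl by metis
  next
    case False
    then have "(u, v) \<in> adj_rel (A - M) (contr_args M args)" using uv by blast
    then have uA: "u \<in> A - M" and vA: "v \<in> A - M"
      and ne: "set (map ?cv (args u)) \<inter> set (map ?cv (args v)) \<noteq> {}"
      unfolding adj_rel_def contr_args_def by auto
    then obtain x y where x: "x \<in> set (args u)" and y: "y \<in> set (args v)" and xy: "?cv x = ?cv y"
      by auto
    have yx: "y \<in> ?cv x" using xy cv_self[of y M args] by simp
    show ?thesis
    proof (rule cv_cases[where M=M and args=args and x=x])
      fix C assume C: "C \<in> components M args" "x \<in> qvars C args" "?cv x = qvars C args"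
      obtain m1 where m1: "m1 \<in> C" "x \<in> set (args m1)" using C(2) unfolding qvars_def by blast
      obtain m2 where m2: "m2 \<in> C" "y \<in> set (args m2)" using C(3) yx unfolding qvars_def by auto
      have CM: "C \<subseteq> M" by (rule comp_sub[OF C(1)])
      have "C = conn_rel M args `` {m1}" by (rule comp_class[OF C(1) m1(1)])
      then have "(m1, m2) \<in> conn_rel M args" using m2(1) by simp
      then have 2: "(m1, m2) \<in> conn_rel A args" using conn_mono[OF MA] by blast
      have ne1: "set (args u) \<inter> set (args m1) \<noteq> {}" using x m1 by blast
      have 1: "(u, m1) \<in> conn_rel A args" by (rule conn_adj[of u A m1 args, OF _ _ ne1]) (use uA m1 CM MA in auto)
      have ne3: "set (args m2) \<inter> set (args v) \<noteq> {}" using y m2 by blast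
      have 3: "(m2, v) \<in> conn_rel A args" by (rule conn_adj[of m2 A v args, OF _ _ ne3]) (use vA m2 CM MA in auto)
      show ?thesis by (rule conn_trans[OF conn_trans[OF 1 2] 3])
    next
      assume "x \<notin> qvars M args" "?cv x = {x}"
      then have "y = x" using yx by simp
      then have ne: "set (args u) \<inter> set (args v) \<noteq> {}" using x y by blast
      show ?thesis by (rule conn_adj[of u A v args, OF _ _ ne]) (use uA vA in auto)
    qed
  qed
  show ?thesis using p unfolding conn_rel_def[of "A - M"]
  proof (induction rule: trancl_induct)
    case (base y)
    then show ?case by (rule stp)
  next
    case (step y z)
    show ?case by (rule conn_trans[OF step.IH stp[OF step.hyps(2)]])
  qed
qed


lemma key_bwd:
  assumes MA: "M \<subseteq> A" and rA: "r \<in> A - M" and p: "(r, s) \<in> conn_rel A args" and sA: "s \<notin> M"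
  shows "(r, s) \<in> conn_rel (A - M) (contr_args M args)"
proof -
  let ?cv = "contr_var M args"
  let ?c' = "conn_rel (A - M) (contr_args M args)"
  define P where "P v \<longleftrightarrow> (v \<in> A - M \<and> (r, v) \<in> ?c') \<or>
     (v \<in> M \<and> (\<exists>s\<in>A - M. (r, s) \<in> ?c' \<and> (\<exists>y\<in>set (args s). y \<in> qvars (conn_rel M args `` {v}) args)))" for v
  have adj': "(u, w) \<in> ?c'" if "u \<in> A - M" "w \<in> A - M" "x \<in> set (args u)" "y \<in> set (args w)" "?cv x = ?cv y" for u w x y
  proof -
    have "?cv x \<in> set (contr_args M args u)" "?cv x \<in> set (contr_args M args w)"
      using that unfolding contr_args_def by auto
    then have "set (contr_args M args u) \<inter> set (contr_args M args w) \<noteq> {}" by blast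
    then show ?thesis by (rule conn_adj[OF that(1,2)])
  qed
  have P0: "P r" unfolding P_def using rA conn_refl[OF rA] by blast
  have stp: "P w" if Pv: "P v" and vw: "(v, w) \<in> Id_on A \<union> adj_rel A args" for v w
  proof (cases "(v, w) \<in> Id_on A")
    case True
    then show ?thesis using Pv by auto
  next
    case False
    then have "(v, w) \<in> adj_rel A args" using vw by blast
    then obtain x where vA: "v \<in> A" and wA: "w \<in> A" and xv: "x \<in> set (args v)" and xw: "x \<in> set (args w)"
      unfolding adj_rel_def by auto
    show ?thesis
    proof (cases "v \<in> M")
      case False
      then have v': "v \<in> A - M" "(r, v) \<in> ?c'" using Pv unfolding P_def by auto
      show ?thesis
      proof (cases "w \<in> M")
        case False
        then have w': "w \<in> A - M" using wA by blast
        have "(v, w) \<in> ?c'" by (rule adj'[OF v'(1) w' xv xw refl])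
        then have "(r, w) \<in> ?c'" by (rule conn_trans[OF v'(2)])
        then show ?thesis unfolding P_def using w' by blast
      next
        case True
        have "w \<in> conn_rel M args `` {w}" by (rule comp_self[OF True])
        then have "x \<in> qvars (conn_rel M args `` {w}) args" using xw unfolding qvars_def by blast
        then show ?thesis unfolding P_def using True v' xv by blast
      qed
    next
      case True
      then obtain s y where s: "s \<in> A - M" "(r, s) \<in> ?c'" "y \<in> set (args s)"
        "y \<in> qvars (conn_rel M args `` {v}) args"
        using Pv unfolding P_def by blast
      show ?thesis
      proof (cases "w \<in> M")
        case True
        have "set (args v) \<inter> set (args w) \<noteq> {}" using xv xw by blast
        then have "(v, w) \<in> conn_rel M args" by (rule conn_adj[OF \<open>v \<in> M\<close> True])
        then have "conn_rel M args `` {v} = conn_rel M args `` {w}" by (rule equiv_class_eq[OF conn_equiv])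
        then show ?thesis unfolding P_def using True s by metis
      next
        case False
        then have w': "w \<in> A - M" using wA by blast
        have C: "conn_rel M args `` {v} \<in> components M args" by (rule comp_in[OF True])
        have "v \<in> conn_rel M args `` {v}" by (rule comp_self[OF True])
        then have "x \<in> qvars (conn_rel M args `` {v}) args" using xv unfolding qvars_def by blast
        then have "?cv y = ?cv x" using cv_comp[OF C] s(4) by simp
        then have "(s, w) \<in> ?c'" by (rule adj'[OF s(1) w' s(3) xw])
        then have "(r, w) \<in> ?c'" by (rule conn_trans[OF s(2)])
        then show ?thesis unfolding P_def using w' by blast
      qed
    qed
  qed
  have "P s" using p unfolding conn_rel_def[of A]
  proof (induction rule: trancl_induct)
    case (base y)
    then show ?case by (rule stp[OF P0])
  next
    case (step y z)
    show ?case by (rule stp[OF step.IH step.hyps(2)])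
  qed
  then show ?thesis unfolding P_def using sA by blast
qed


lemma class_diff:
  assumes MA: "M \<subseteq> A" and rA: "r \<in> A - M"
  shows "conn_rel A args `` {r} - M = conn_rel (A - M) (contr_args M args) `` {r}"
proof
  show "conn_rel A args `` {r} - M \<subseteq> conn_rel (A - M) (contr_args M args) `` {r}"
  proof
    fix v assume "v \<in> conn_rel A args `` {r} - M"
    then have "(r, v) \<in> conn_rel A args" "v \<notin> M" by auto
    then have "(r, v) \<in> conn_rel (A - M) (contr_args M args)" by (rule key_bwd[OF MA rA])
    then show "v \<in> conn_rel (A - M) (contr_args M args) `` {r}" by simp
  qed
  show "conn_rel (A - M) (contr_args M args) `` {r} \<subseteq> conn_rel A args `` {r} - M"
  proof
    fix v assume "v \<in> conn_rel (A - M) (contr_args M args) `` {r}"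
    then have h: "(r, v) \<in> conn_rel (A - M) (contr_args M args)" by simp
    then have "v \<in> A - M" using conn_sub by blast
    moreover have "(r, v) \<in> conn_rel A args" by (rule key_fwd[OF MA h])
    ultimately show "v \<in> conn_rel A args `` {r} - M" by simp
  qed
qed

lemma comps_bij:
  assumes MA: "M \<subseteq> A"
  shows "bij_betw (\<lambda>D. D - M) {D \<in> components A args. \<not> D \<subseteq> M} (components (A - M) (contr_args M args))"
proof (rule bij_betwI')
  fix D1 D2 assume D1: "D1 \<in> {D \<in> components A args. \<not> D \<subseteq> M}" and D2: "D2 \<in> {D \<in> components A args. \<not> D \<subseteq> M}"
  show "(D1 - M = D2 - M) = (D1 = D2)"
  proof
    assume eq: "D1 - M = D2 - M"
    obtain r where "r \<in> D1 - M" using D1 by blast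
    then have "r \<in> D1 \<inter> D2" using eq by blast
    then show "D1 = D2" using comp_disj[of D1 A args D2] D1 D2 by blast
  qed simp
next
  fix D assume D: "D \<in> {D \<in> components A args. \<not> D \<subseteq> M}"
  then obtain r where r: "r \<in> D" "r \<notin> M" by blast
  have DA: "D \<in> components A args" using D by blast
  have rA: "r \<in> A - M" using comp_sub[OF DA] r by blast
  have "D - M = conn_rel (A - M) (contr_args M args) `` {r}"
    using class_diff[OF MA rA, of args] comp_class[OF DA r(1)] by simp
  then show "D - M \<in> components (A - M) (contr_args M args)" using comp_in[OF rA] by simp
next
  fix E assume "E \<in> components (A - M) (contr_args M args)"
  then obtain r where rA: "r \<in> A - M" and E: "E = conn_rel (A - M) (contr_args M args) `` {r}"
    unfolding components_def by (auto elim: quotientE)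
  have rA': "r \<in> A" using rA by blast
  have D: "conn_rel A args `` {r} \<in> components A args" by (rule comp_in[OF rA'])
  have "r \<in> conn_rel A args `` {r}" by (rule comp_self[OF rA'])
  then have "\<not> conn_rel A args `` {r} \<subseteq> M" using rA by blast
  moreover have "E = conn_rel A args `` {r} - M" using class_diff[OF MA rA, of args] E by simp
  ultimately show "\<exists>D\<in>{D \<in> components A args. \<not> D \<subseteq> M}. E = D - M" using D by blast
qed

lemma comps_inside:
  assumes MA: "M \<subseteq> A"
  shows "{D \<in> components A args. D \<subseteq> M} =
    {C \<in> components M args. qvars C args \<inter> qvars (A - M) args = {}}"
proof
  show "{D \<in> components A args. D \<subseteq> M} \<subseteq> {C \<in> components M args. qvars C args \<inter> qvars (A - M) args = {}}"
  proof
    fix D assume "D \<in> {D \<in> components A args. D \<subseteq> M}"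
    then have DA: "D \<in> components A args" and DM: "D \<subseteq> M" by auto
    obtain u where u: "u \<in> D" using comp_ne[OF DA] by blast
    have "conn_rel A args `` {u} = conn_rel D args `` {u}"
      by (rule closed_class[OF comp_sub[OF DA] _ u]) (rule comp_closed[OF DA])
    also have "\<dots> \<subseteq> conn_rel M args `` {u}" by (rule Image_mono[OF conn_mono[OF DM] subset_refl])
    finally have 1: "conn_rel A args `` {u} \<subseteq> conn_rel M args `` {u}" .
    have 2: "conn_rel M args `` {u} \<subseteq> conn_rel A args `` {u}" by (rule Image_mono[OF conn_mono[OF MA] subset_refl])
    have "D = conn_rel M args `` {u}" using 1 2 comp_class[OF DA u] by blast
    moreover have "u \<in> M" using u DM by blast
    ultimately have DM': "D \<in> components M args" using comp_in by metis
    have "qvars D args \<inter> qvars (A - M) args = {}"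
    proof (rule ccontr)
      assume "qvars D args \<inter> qvars (A - M) args \<noteq> {}"
      then obtain x s where x: "x \<in> qvars D args" and s: "s \<in> A - M" "x \<in> set (args s)"
        unfolding qvars_def by blast
      have "s \<in> D" by (rule comp_var_atom[OF DA x _ s(2)]) (use s in blast)
      then show False using DM s by blast
    qed
    then show "D \<in> {C \<in> components M args. qvars C args \<inter> qvars (A - M) args = {}}" using DM' by blast
  qed
  show "{C \<in> components M args. qvars C args \<inter> qvars (A - M) args = {}} \<subseteq> {D \<in> components A args. D \<subseteq> M}"
  proof
    fix C assume "C \<in> {C \<in> components M args. qvars C args \<inter> qvars (A - M) args = {}}"
    then have CM: "C \<in> components M args" and dis: "qvars C args \<inter> qvars (A - M) args = {}" by auto
    have CM': "C \<subseteq> M" by (rule comp_sub[OF CM])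
    have CA: "C \<subseteq> A" using CM' MA by blast
    obtain u where u: "u \<in> C" using comp_ne[OF CM] by blast
    have cl: "v \<in> C" if h1: "u' \<in> C" and h2: "v \<in> A" and h3: "set (args u') \<inter> set (args v) \<noteq> {}" for u' v
    proof (cases "v \<in> M")
      case True
      then show ?thesis by (rule comp_closed[OF CM h1 _ h3])
    next
      case False
      then obtain x where "x \<in> set (args u')" "x \<in> set (args v)" using h3 by blast
      then have "x \<in> qvars C args" "x \<in> qvars (A - M) args"
        using h1 h2 False unfolding qvars_def by blast+
      then show ?thesis using dis by blast
    qed
    have "conn_rel A args `` {u} = conn_rel C args `` {u}"
      by (rule closed_class[OF CA cl u])
    also have "\<dots> \<subseteq> C" using conn_sub[of C args] by blast
    finally have 1: "conn_rel A args `` {u} \<subseteq> C" .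
    have "C = conn_rel M args `` {u}" by (rule comp_class[OF CM u])
    also have "\<dots> \<subseteq> conn_rel A args `` {u}" by (rule Image_mono[OF conn_mono[OF MA] subset_refl])
    finally have "C = conn_rel A args `` {u}" using 1 by blast
    moreover have "u \<in> A" using u CA by blast
    ultimately have "C \<in> components A args" using comp_in by metis
    then show "C \<in> {D \<in> components A args. D \<subseteq> M}" using CM' by blast
  qed
qed


lemma contr_vars:
  assumes MA: "M \<subseteq> A"
  shows "qvars (A - M) (contr_args M args) = (\<lambda>x. {x}) ` (qvars (A - M) args - qvars M args)
     \<union> (\<lambda>C. qvars C args) ` {C \<in> components M args. qvars C args \<inter> qvars (A - M) args \<noteq> {}}"
    (is "?L = ?S \<union> ?T")
proof -
  let ?cv = "contr_var M args"
  have L: "?L = ?cv ` qvars (A - M) args" unfolding qvars_def contr_args_def by auto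
  show ?thesis unfolding L
  proof
    show "?cv ` qvars (A - M) args \<subseteq> ?S \<union> ?T"
    proof
      fix X assume "X \<in> ?cv ` qvars (A - M) args"
      then obtain x where x: "x \<in> qvars (A - M) args" "X = ?cv x" by blast
      show "X \<in> ?S \<union> ?T"
      proof (rule cv_cases[where M=M and args=args and x=x])
        fix C assume C: "C \<in> components M args" "x \<in> qvars C args" "?cv x = qvars C args"
        then have "C \<in> {C \<in> components M args. qvars C args \<inter> qvars (A - M) args \<noteq> {}}" using x(1) by blast
        then show ?thesis using C(3) x(2) by blast
      next
        assume "x \<notin> qvars M args" "?cv x = {x}"
        then show ?thesis using x by blast
      qed
    qed
    show "?S \<union> ?T \<subseteq> ?cv ` qvars (A - M) args"
    proof
      fix X assume "X \<in> ?S \<union> ?T"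
      then show "X \<in> ?cv ` qvars (A - M) args"
      proof
        assume "X \<in> ?S"
        then obtain x where "x \<in> qvars (A - M) args" "x \<notin> qvars M args" "X = {x}" by blast
        then show ?thesis using cv_out[of x M args] by (metis image_eqI)
      next
        assume "X \<in> ?T"
        then obtain C x where C: "C \<in> components M args" "x \<in> qvars C args" "x \<in> qvars (A - M) args" "X = qvars C args"
          by blast
        then show ?thesis using cv_comp[OF C(1,2)] by (metis image_eqI)
      qed
    qed
  qed
qed

lemma contr_chi:
  assumes fin: "finite A" and MA: "M \<subseteq> A"
  shows "chi (A - M) (contr_args M args) = chi A args - chi M args"
proof -
  define V' where "V' = qvars (A - M) args"
  define VM where "VM = qvars M args"
  define T where "T = {C \<in> components M args. qvars C args \<inter> V' \<noteq> {}}"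
  have finM: "finite M" using fin MA finite_subset by blast
  have finV': "finite V'" unfolding V'_def by (rule qvars_finite) (use fin in simp)
  have finVM: "finite VM" unfolding VM_def by (rule qvars_finite[OF finM])
  have finCM: "finite (components M args)" by (rule comp_finite[OF finM])
  have TC: "T \<subseteq> components M args" unfolding T_def by blast
  have finT: "finite T" using finite_subset[OF TC finCM] .
  have k': "card (qvars (A - M) (contr_args M args)) = card (V' - VM) + card T"
  proof -
    have e: "qvars (A - M) (contr_args M args) = (\<lambda>x. {x}) ` (V' - VM) \<union> (\<lambda>C. qvars C args) ` T"
      unfolding V'_def VM_def T_def by (rule contr_vars[OF MA])
    have c1: "card ((\<lambda>x. {x}) ` (V' - VM)) = card (V' - VM)"
      by (rule card_image) (auto simp: inj_on_def)
    have inj: "inj_on (\<lambda>C. qvars C args) T"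
    proof (rule inj_onI)
      fix C1 C2 assume C1: "C1 \<in> T" and C2: "C2 \<in> T" and eq: "qvars C1 args = qvars C2 args"
      show "C1 = C2"
      proof (rule ccontr)
        assume "C1 \<noteq> C2"
        then have "qvars C1 args \<inter> qvars C2 args = {}" using comp_vars_disj C1 C2 TC by blast
        then show False using eq C1 unfolding T_def by blast
      qed
    qed
    have c2: "card ((\<lambda>C. qvars C args) ` T) = card T" by (rule card_image[OF inj])
    have dis: "(\<lambda>x. {x}) ` (V' - VM) \<inter> (\<lambda>C. qvars C args) ` T = {}"
    proof (rule ccontr)
      assume "(\<lambda>x. {x}) ` (V' - VM) \<inter> (\<lambda>C. qvars C args) ` T \<noteq> {}"
      then obtain x C where "x \<in> V'" "x \<notin> VM" "C \<in> T" "{x} = qvars C args" by blast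
      moreover have "qvars C args \<subseteq> VM" unfolding VM_def
        by (rule qvars_mono[OF comp_sub]) (use \<open>C \<in> T\<close> TC in blast)
      ultimately show False by blast
    qed
    show ?thesis unfolding e
      by (subst card_Un_disjoint) (use finV' finT dis c1 c2 in auto)
  qed
  have k: "card (qvars A args) = card (V' - VM) + card VM"
  proof -
    have "A = (A - M) \<union> M" using MA by blast
    then have "qvars A args = V' \<union> VM" unfolding V'_def VM_def by (metis qvars_Un)
    then have e: "qvars A args = (V' - VM) \<union> VM" by blast
    show ?thesis unfolding e by (rule card_Un_disjoint) (use finV' finVM in auto)
  qed
  have l: "int (card (A - M)) = int (card A) - int (card M)"
    using card_Diff_subset[OF finM MA] card_mono[OF fin MA] by simp
  have a: "(\<Sum>r\<in>A - M. int (length (contr_args M args r))) = (\<Sum>r\<in>A. int (length (args r))) - (\<Sum>r\<in>M. int (length (args r)))"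
  proof -
    have "(\<Sum>r\<in>A - M. int (length (contr_args M args r))) = (\<Sum>r\<in>A - M. int (length (args r)))"
      unfolding contr_args_def by simp
    also have "\<dots> = (\<Sum>r\<in>A. int (length (args r))) - (\<Sum>r\<in>M. int (length (args r)))"
      by (rule sum_diff[OF fin MA])
    finally show ?thesis .
  qed
  define S1 where "S1 = {D \<in> components A args. D \<subseteq> M}"
  define S2 where "S2 = {D \<in> components A args. \<not> D \<subseteq> M}"
  have finCA: "finite (components A args)" by (rule comp_finite[OF fin])
  have c: "card (components A args) = card S1 + card S2"
  proof -
    have "components A args = S1 \<union> S2" "S1 \<inter> S2 = {}" unfolding S1_def S2_def by blast+
    moreover have "finite S1" "finite S2" unfolding S1_def S2_def using finCA by auto
    ultimately show ?thesis using card_Un_disjoint by metis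
  qed
  have c': "card (components (A - M) (contr_args M args)) = card S2"
    unfolding S2_def using bij_betw_same_card[OF comps_bij[OF MA, of args]] by simp
  have s1: "card S1 = card (components M args) - card T"
  proof -
    have "S1 = components M args - T" unfolding S1_def T_def V'_def comps_inside[OF MA] by blast
    then show ?thesis using card_Diff_subset[OF finT TC] by simp
  qed
  have TleCM: "card T \<le> card (components M args)" by (rule card_mono[OF finCM TC])
  show ?thesis unfolding chi_def
    using k' k l a c c' s1 TleCM unfolding VM_def by simp
qed


lemma chi_comps:
  assumes fin: "finite A"
  shows "chi A args = (\<Sum>C\<in>components A args. chi C args)"
proof -
  let ?K = "components A args"
  have finK: "finite ?K" by (rule comp_finite[OF fin])
  have finC: "\<forall>C\<in>?K. finite C"
  proof
    fix C assume "C \<in> ?K"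
    then have "C \<subseteq> A" by (rule comp_sub)
    then show "finite C" using fin by (rule finite_subset)
  qed
  have finV: "\<forall>C\<in>?K. finite (qvars C args)" using finC qvars_finite by blast
  have disj: "\<forall>C\<in>?K. \<forall>D\<in>?K. C \<noteq> D \<longrightarrow> C \<inter> D = {}" using comp_disj by blast
  have disjV: "\<forall>C\<in>?K. \<forall>D\<in>?K. C \<noteq> D \<longrightarrow> qvars C args \<inter> qvars D args = {}" using comp_vars_disj by blast
  have U: "\<Union>((\<lambda>C. C) ` ?K) = A" using comp_union[of A args] by simp
  have 1: "card A = (\<Sum>C\<in>?K. card C)"
    using card_UN_disjoint[OF finK finC disj] U by simp
  have 2: "card (qvars A args) = (\<Sum>C\<in>?K. card (qvars C args))"
    using card_UN_disjoint[OF finK finV disjV] qvars_comp[of A args] by simp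
  have 3: "(\<Sum>r\<in>A. int (length (args r))) = (\<Sum>C\<in>?K. \<Sum>r\<in>C. int (length (args r)))"
    using sum.UNION_disjoint[OF finK finC disj, of "\<lambda>r. int (length (args r))"] U by simp
  have 4: "card ?K = (\<Sum>C\<in>?K. card (components C args))"
    using comp_of_comp[of _ A args] by simp
  have "(\<Sum>C\<in>?K. chi C args) = (\<Sum>C\<in>?K. int (card (qvars C args)) + int (card C)
     - (\<Sum>r\<in>C. int (length (args r))) - int (card (components C args)))"
    unfolding chi_def ..
  also have "\<dots> = int (card (qvars A args)) + int (card A) - (\<Sum>r\<in>A. int (length (args r))) - int (card ?K)"
    unfolding 1 2 3 4 by (simp add: sum_subtractf sum.distrib)
  finally show ?thesis unfolding chi_def by simp
qed

lemma chi_single: "chi {r} args \<le> 0"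
proof -
  have "conn_rel {r} args `` {r} = {r}" using conn_sub[of "{r}" args] conn_refl[of r "{r}" args] by blast
  then have "components {r} args = {{r}}" unfolding components_def singleton_quotient by simp
  moreover have "qvars {r} args = set (args r)" unfolding qvars_def by simp
  ultimately show ?thesis unfolding chi_def using card_length[of "args r"] by simp
qed

lemma chi_nonpos:
  fixes A :: "'r set" and args :: "'r \<Rightarrow> 'v list"
  assumes "finite A"
  shows "chi A args \<le> 0"
  using assms
proof (induction "card A" arbitrary: A args rule: less_induct)
  case less
  show ?case
  proof (cases "A = {}")
    case True
    then show ?thesis unfolding chi_def qvars_def components_def by simp
  next
    case False
    then obtain r where rA: "r \<in> A" by blast
    let ?M = "{r}"
    have MA: "?M \<subseteq> A" using rA by blast
    let ?cv = "contr_var ?M args"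
    define rep :: "'v set \<Rightarrow> 'v" where "rep X = (SOME z. z \<in> X)" for X
    have rep_in: "rep (?cv x) \<in> ?cv x" for x unfolding rep_def by (rule someI[where x=x]) (rule cv_self)
    have inj: "inj_on rep (qvars (A - ?M) (contr_args ?M args))"
    proof (rule inj_onI)
      fix X Y assume X: "X \<in> qvars (A - ?M) (contr_args ?M args)" and Y: "Y \<in> qvars (A - ?M) (contr_args ?M args)"
        and eq: "rep X = rep Y"
      obtain x where x: "X = ?cv x" using X unfolding qvars_def contr_args_def by auto
      obtain y where y: "Y = ?cv y" using Y unfolding qvars_def contr_args_def by auto
      have "rep X \<in> ?cv x" using rep_in x by simp
      then have cx: "?cv (rep X) = ?cv x" by (rule cv_eq)
      have "rep Y \<in> ?cv y" using rep_in y by simp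
      then have cy: "?cv (rep Y) = ?cv y" by (rule cv_eq)
      show "X = Y" using x y eq cx cy by simp
    qed
    have e1: "chi (A - ?M) (\<lambda>s. map rep (contr_args ?M args s)) = chi (A - ?M) (contr_args ?M args)"
      by (rule rename_chi[OF inj])
    have "card (A - ?M) < card A" by (rule card_Diff1_less[OF less.prems rA])
    moreover have "finite (A - ?M)" using less.prems by simp
    ultimately have "chi (A - ?M) (\<lambda>s. map rep (contr_args ?M args s)) \<le> 0" using less.hyps by blast
    then have "chi (A - ?M) (contr_args ?M args) \<le> 0" using e1 by simp
    moreover have "chi (A - ?M) (contr_args ?M args) = chi A args - chi ?M args"
      by (rule contr_chi[OF less.prems MA])
    moreover have "chi ?M args \<le> 0" by (rule chi_single)
    ultimately show ?thesis by simp
  qed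
qed

theorem lemma1:
  fixes A :: "'r set" and args :: "'r \<Rightarrow> 'v list"
  assumes "finite A"
  shows "chi A args = (\<Sum>C\<in>components A args. chi C args)
    \<and> (\<forall>M. M \<subseteq> A \<longrightarrow>
          chi (contr_atoms A M) (contr_args M args) = chi A args - chi M args)
    \<and> chi A args \<le> 0
    \<and> (\<forall>M. M \<subseteq> A \<longrightarrow> chi A args \<le> chi (contr_atoms A M) (contr_args M args))"
proof (intro conjI allI impI)
  show "chi A args = (\<Sum>C\<in>components A args. chi C args)" by (rule chi_comps[OF assms])
  fix M assume MA: "M \<subseteq> A"
  show "chi (contr_atoms A M) (contr_args M args) = chi A args - chi M args"
    unfolding contr_atoms_def by (rule contr_chi[OF assms MA])
next
  show "chi A args \<le> 0" by (rule chi_nonpos[OF assms])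
next
  fix M assume MA: "M \<subseteq> A"
  have "finite M" using assms MA finite_subset by blast
  then have "chi M args \<le> 0" by (rule chi_nonpos)
  then show "chi A args \<le> chi (contr_atoms A M) (contr_args M args)"
    unfolding contr_atoms_def using contr_chi[OF assms MA, of args] by simp
qed


end
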